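(* Let $n \geq 2$ and $1 \le k \le n$ with $k \geq \frac{n}{2}$, and write points of $\mathbb{R}^n$ as $(x,y)$ with $x \in \mathbb{R}^{n-k}$, $y \in \mathbb{R}^k$. Let $u$ be a convex function on the unit ball $B_1 \subset \mathbb{R}^n$ with $\det D^2 u \leq \Lambda < \infty$ in $B_1$ in the Alexandrov sense. If $u(0) = 0$ and $u(x,y) \geq |y|$ in $B_1$, then the set $\{u = 0\}$ has no extremal points in $\{y = 0\} \cap B_1$.
   Context: For a convex function $v$ on a domain $U$, its Monge–Ampère measure $Mv$ is given by $Mv(E) = |\partial v(E)|$ for Borel $E\subset U$ ($\partial v$ the subgradient, $|\cdot|$ Lebesgue measure); "$\det D^2 v \le \Lambda$ in the Alexandrov sense" means $Mv \le \Lambda\,dx$. An extremal point of a convex set is a point that is not in the interior of any segment contained in the set. *)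

theory Defs
  imports "HOL-Analysis.Analysis"
begin

definition subgradient :: "('a::euclidean_space \<Rightarrow> real) \<Rightarrow> 'a set \<Rightarrow> 'a \<Rightarrow> 'a set" where
  "subgradient u U z = {p. \<forall>w\<in>U. u w \<ge> u z + p \<bullet> (w - z)}"

text \<open>det D^2 u \<le> Lambda in the Alexandrov sense on U: for every Borel E \<subseteq> U the
  (outer) Lebesgue measure of the subgradient image is at most Lambda |E|.\<close>
definition MA_le :: "('a::euclidean_space \<Rightarrow> real) \<Rightarrow> 'a set \<Rightarrow> real \<Rightarrow> bool" where
  "MA_le u U \<Lambda> \<longleftrightarrow> (\<forall>E. E \<in> sets borel \<and> E \<subseteq> U \<longrightarrow>
     (\<exists>T \<in> sets lebesgue. (\<Union>z\<in>E. subgradient u U z) \<subseteq> T \<and>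
        emeasure lebesgue T \<le> ennreal \<Lambda> * emeasure lebesgue E))"

definition ypart :: "'n set \<Rightarrow> real ^ 'n \<Rightarrow> real ^ 'n" where
  "ypart K z = (\<chi> i. if i \<in> K then z $ i else 0)"

end

theory Submission
  imports Defs
begin

lemma emeasure_cbox_cart:
  fixes a b :: "real^'n"
  assumes "\<And>i. a$i \<le> b$i"
  shows "emeasure lebesgue (cbox a b) = ennreal (\<Prod>i\<in>UNIV. b$i - a$i)"
proof -
  have ne: "cbox a b \<noteq> {}" using assms by (auto simp: cbox_def Basis_vec_def cart_eq_inner_axis) 
  have "emeasure lebesgue (cbox a b) = emeasure lborel (cbox a b)" by simp
  also have "\<dots> = ennreal (measure lborel (cbox a b))"
    by (simp add: emeasure_eq_measure2 emeasure_lborel_cbox_finite)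
  also have "\<dots> = ennreal (\<Prod>i\<in>UNIV. b$i - a$i)" using content_cbox_cart[OF ne] by simp
  finally show ?thesis .
qed

lemma emeasure_box_cart:
  fixes a b :: "real^'n"
  assumes "\<And>i. a$i \<le> b$i"
  shows "emeasure lebesgue (box a b) = ennreal (\<Prod>i\<in>UNIV. b$i - a$i)"
proof -
  have "emeasure lebesgue (box a b) = emeasure lborel (box a b)" by simp
  also have "\<dots> = emeasure lborel (cbox a b)"
    by (simp add: emeasure_lborel_box_eq emeasure_lborel_cbox_eq)
  also have "\<dots> = ennreal (\<Prod>i\<in>UNIV. b$i - a$i)" using emeasure_cbox_cart[OF assms] by simp
  finally show ?thesis .
qed



lemma convex_on_minus_affine:
  fixes f :: "'a::real_inner \<Rightarrow> real"
  assumes "convex_on S f"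
  shows "convex_on S (\<lambda>w. f w - (b \<bullet> w + k))"
proof (rule convex_onI)
  show "convex S" using assms by (simp add: convex_on_def)
  fix t :: real and x y assume t: "t > 0" "t < 1" and xy: "x \<in> S" "y \<in> S"
  have "f ((1 - t) *\<^sub>R x + t *\<^sub>R y) \<le> (1 - t) * f x + t * f y"
    using convex_onD[OF assms] t xy by simp
  moreover have "b \<bullet> ((1 - t) *\<^sub>R x + t *\<^sub>R y) + k = (1-t) * (b \<bullet> x + k) + t * (b \<bullet> y + k)"
    by (simp add: inner_add_right algebra_simps)
  ultimately show "f ((1 - t) *\<^sub>R x + t *\<^sub>R y) - (b \<bullet> ((1 - t) *\<^sub>R x + t *\<^sub>R y) + k)
      \<le> (1 - t) * (f x - (b \<bullet> x + k)) + t * (f y - (b \<bullet> y + k))"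
    by (simp add: algebra_simps)
qed

lemma exists_delta:
  fixes u l :: "'a::topological_space \<Rightarrow> real"
  assumes "compact Q" "continuous_on Q u" "\<And>q. q \<in> Q \<Longrightarrow> u q > 0"
    "\<And>q. q \<in> Q \<Longrightarrow> l q \<le> Lb" "Lb > 0"
  shows "\<exists>\<delta>>0. \<forall>q\<in>Q. \<delta> * l q < u q"
proof (cases "Q = {}")
  case True then show ?thesis by (intro exI[of _ 1]) auto
next
  case False
  obtain x where x: "x \<in> Q" "\<And>y. y \<in> Q \<Longrightarrow> u x \<le> u y"
    using continuous_attains_inf[OF assms(1) False assms(2)] by blast
  define m where "m = u x"
  have m: "m > 0" using assms(3)[OF x(1)] m_def by simp
  show ?thesis
  proof (intro exI[of _ "m / (2*Lb)"] conjI ballI)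
    show "m / (2*Lb) > 0" using m assms(5) by simp
    fix q assume q: "q \<in> Q"
    have "m / (2*Lb) * l q \<le> m / (2*Lb) * Lb"
      using assms(4)[OF q] m assms(5) by (intro mult_left_mono) auto
    also have "\<dots> = m/2" using assms(5) by simp
    also have "\<dots> < u q" using x(2)[OF q] m m_def by simp
    finally show "m / (2*Lb) * l q < u q" .
  qed
qed

lemma prod_bound:
  fixes K :: "'n::finite set" and A Bv C :: real
  assumes "0 < Bv" "Bv \<le> A" "Bv \<le> C" "2 * card K \<ge> CARD('n)"
  shows "(\<Prod>i\<in>UNIV. (if i \<in> K then Bv else A)^2) \<le> (A * C) ^ CARD('n)"
proof -
  define k where "k = card K"
  define n where "n = CARD('n)"
  have kn: "k \<le> n" unfolding k_def n_def by (simp add: card_mono)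
  have cm: "card (- K) = n - k"
  proof -
    have "- K = UNIV - K" by auto
    then show ?thesis unfolding k_def n_def by (simp add: card_Diff_subset)
  qed
  have "(\<Prod>i\<in>UNIV. (if i \<in> K then Bv else A)^2) = (\<Prod>i\<in>UNIV. if i \<in> K then Bv^2 else A^2)"
    by (intro prod.cong) auto
  also have "\<dots> = (Bv^2)^k * (A^2)^(n-k)"
    by (simp add: prod.If_cases cm k_def)
  also have "\<dots> = Bv^n * Bv^(2*k-n) * A^(2*(n-k))"
    using kn assms(4) unfolding k_def n_def
    by (simp add: power_mult[symmetric] power_add[symmetric])
  also have "\<dots> \<le> C^n * A^(2*k-n) * A^(2*(n-k))"
    using assms by (intro mult_right_mono mult_mono power_mono) auto
  also have "\<dots> = C^n * A^(2*k-n + 2*(n-k))"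
    by (simp add: mult.assoc power_add)
  also have "2*k-n + 2*(n-k) = n" using kn assms(4) unfolding k_def n_def by linarith
  also have "C^n * A^n = (A * C) ^ n" by (simp add: power_mult_distrib mult.commute)
  finally show ?thesis by (simp add: n_def)
qed



lemma dist_comb:
  fixes z w :: "'a::real_normed_vector"
  assumes "t \<ge> 0"
  shows "dist z ((1 - t) *\<^sub>R z + t *\<^sub>R w) = t * dist z w"
proof -
  have "z - ((1 - t) *\<^sub>R z + t *\<^sub>R w) = t *\<^sub>R (z - w)" by (simp add: algebra_simps)
  then show ?thesis using assms by (simp add: dist_norm)
qed

lemma ratio01:
  fixes e d :: real
  assumes "0 < e" "e \<le> d"
  shows "0 < e / d \<and> e / d \<le> 1"
  using assms by (simp add: field_simps)

lemma main:
  fixes u :: "real ^ 'n \<Rightarrow> real" and K :: "'n set" and \<Lambda> :: real and z0 :: "real^'n"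
  assumes card2: "2 * card K \<ge> CARD('n)"
    and cvx: "convex_on (ball 0 1) u"
    and MA: "MA_le u (ball 0 1) \<Lambda>"
    and ge: "\<And>z. z \<in> ball 0 1 \<Longrightarrow> u z \<ge> norm (ypart K z)"
    and ext: "z0 extreme_point_of {z \<in> ball 0 1. u z = 0}"
  shows False
proof -
  define B where "B = ball (0::real^'n) 1"
  define Z where "Z = {z \<in> B. u z = 0}"
  define n where "n = CARD('n)"
  have n1: "n \<ge> 1" unfolding n_def by (simp add: Suc_leI)
  have convB: "convex B" unfolding B_def by simp
  have openB: "open B" unfolding B_def by simp
  have cvxB: "convex_on B u" using cvx B_def by simp
  have contB: "continuous_on B u" using convex_on_continuous[OF _ cvxB] B_def by simp
  have ypart_comp: "\<And>w i. i \<in> K \<Longrightarrow> \<bar>w $ i\<bar> \<le> norm (ypart K w)"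
  proof -
    fix w :: "real^'n" and i assume "i \<in> K"
    then have "ypart K w $ i = w $ i" by (simp add: ypart_def)
    then show "\<bar>w $ i\<bar> \<le> norm (ypart K w)" by (metis component_le_norm_cart)
  qed
  have unn: "\<And>w. w \<in> B \<Longrightarrow> u w \<ge> 0" using ge B_def by (meson norm_ge_zero order_trans)
  have convZ: "convex Z"
  proof (rule convexI)
    fix x y :: "real^'n" and t1 t2 :: real assume *: "x \<in> Z" "y \<in> Z" "0 \<le> t1" "0 \<le> t2" "t1 + t2 = 1"
    have xB: "x \<in> B" "y \<in> B" using * Z_def by auto
    have inB: "t1 *\<^sub>R x + t2 *\<^sub>R y \<in> B" using convexD[OF convB xB *(3-5)] .
    have t1: "t1 = 1 - t2" using * by simp
    have "u (t1 *\<^sub>R x + t2 *\<^sub>R y) \<le> (1 - t2) * u x + t2 * u y"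
      unfolding t1 using convex_onD[OF cvxB] * xB by simp
    then have "u (t1 *\<^sub>R x + t2 *\<^sub>R y) \<le> 0" using * Z_def by auto
    then show "t1 *\<^sub>R x + t2 *\<^sub>R y \<in> Z" using unn[OF inB] inB Z_def by simp
  qed
  have extZ: "z0 extreme_point_of Z" using ext Z_def B_def by simp
  have z0Z: "z0 \<in> Z" using extZ extreme_point_of_def by blast
  have z0B: "z0 \<in> B" using z0Z Z_def by simp
  have uz0: "u z0 = 0" using z0Z Z_def by simp
  define X where "X = 4 * real n * (\<bar>\<Lambda>\<bar> + 1)"
  have Xpos: "X > 0" unfolding X_def using n1 by (simp add: add_pos_nonneg)
  obtain \<epsilon> where \<epsilon>: "\<epsilon> > 0" "\<epsilon> < 1 - norm z0" "\<epsilon> * X < 1"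
  proof -
    define \<epsilon> where "\<epsilon> = min ((1 - norm z0)/2) (1 / (2 * X))"
    have "norm z0 < 1" using z0B B_def by simp
    then have "\<epsilon> > 0" using Xpos by (auto simp: \<epsilon>_def)
    moreover have "\<epsilon> \<le> (1 - norm z0)/2" unfolding \<epsilon>_def by (rule min.cobounded1)
    then have "\<epsilon> < 1 - norm z0" using \<open>norm z0 < 1\<close> by (simp add: field_simps)
    moreover have "\<epsilon> * X \<le> (1 / (2 * X)) * X"
      using Xpos by (intro mult_right_mono) (auto simp: \<epsilon>_def)
    moreover have "(1 / (2 * X)) * X = 1/2" using Xpos by simp
    ultimately show ?thesis using that by fastforce
  qed
  have cballB: "cball z0 \<epsilon> \<subseteq> B"
  proof
    fix w assume "w \<in> cball z0 \<epsilon>"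
    then have "norm w \<le> norm z0 + \<epsilon>" using norm_triangle_sub[of w z0] by (auto simp: dist_norm norm_minus_commute)
    then show "w \<in> B" using \<epsilon> B_def by simp
  qed
  have sphB: "sphere z0 \<epsilon> \<subseteq> B" using cballB sphere_cball by blast
  define C where "C = {w \<in> sphere z0 \<epsilon>. u w = 0}"
  have compC: "compact C"
  proof -
    have "closed C" unfolding C_def
      by (rule continuous_closed_preimage_constant[OF continuous_on_subset[OF contB sphB]]) simp
    moreover have "bounded C" unfolding C_def by (rule bounded_subset[OF bounded_sphere[of z0 \<epsilon>]]) auto
    ultimately show ?thesis by (simp add: compact_eq_bounded_closed)
  qed
  have CZ: "C \<subseteq> Z - {z0}" using sphB \<epsilon>(1) unfolding C_def Z_def by auto
  have convZ0: "convex (Z - {z0})" using extreme_point_of_stillconvex[OF convZ] extZ by blast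
  have Hsub: "convex hull C \<subseteq> Z - {z0}" by (rule hull_minimal[where S=convex, OF CZ convZ0])
  then have z0H: "z0 \<notin> convex hull C" by blast
  obtain a0 b where ab: "a0 \<bullet> z0 < b" "\<forall>x\<in>convex hull C. a0 \<bullet> x > b"
    using separating_hyperplane_closed_point[OF convex_convex_hull
        compact_imp_closed[OF compact_convex_hull[OF compC]] z0H] by blast
  define a where "a = - a0"
  define c where "c = - b"
  define l where "l = (\<lambda>w. a \<bullet> w - c)"
  have lz0: "l z0 > 0" using ab(1) unfolding l_def a_def c_def by simp
  have lC: "\<And>x. x \<in> C \<Longrightarrow> l x < 0" using ab(2) hull_inc[of _ C] unfolding l_def a_def c_def by fastforce
  have laff: "\<And>x y t. l ((1 - t) *\<^sub>R x + t *\<^sub>R y) = (1 - t) * l x + t * l y"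
    unfolding l_def by (simp add: inner_add_right algebra_simps)
  have lcont: "continuous_on UNIV l" unfolding l_def by (intro continuous_intros)
  have cap: "dist z0 w < \<epsilon>" if wZ: "w \<in> Z" and lw: "l w \<ge> 0" for w
  proof (rule ccontr)
    assume "\<not> dist z0 w < \<epsilon>"
    then have dw: "dist z0 w \<ge> \<epsilon>" by simp
    define t where "t = \<epsilon> / dist z0 w"
    have t: "0 < t" "t \<le> 1" using ratio01[OF \<epsilon>(1) dw] unfolding t_def by auto
    define p where "p = (1 - t) *\<^sub>R z0 + t *\<^sub>R w"
    have pZ: "p \<in> Z" unfolding p_def using convexD[OF convZ z0Z wZ, of "1-t" t] t by simp
    have "dist z0 p = t * dist z0 w" unfolding p_def by (rule dist_comb) (use t in simp)
    then have "dist z0 p = \<epsilon>" using dw \<epsilon>(1) unfolding t_def by auto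
    then have "p \<in> C" using pZ unfolding C_def Z_def by simp
    then have "l p < 0" by (rule lC)
    moreover have "l p \<ge> 0" unfolding p_def laff using t lz0 lw
      by (intro add_nonneg_nonneg mult_nonneg_nonneg) auto
    ultimately show False by simp
  qed
  define Lb where "Lb = norm a + \<bar>c\<bar> + 1"
  have Lbpos: "Lb > 0" unfolding Lb_def by (simp add: add_nonneg_pos)
  have lbound: "\<bar>l w\<bar> \<le> Lb" if "w \<in> B" for w
  proof -
    have "\<bar>a \<bullet> w\<bar> \<le> norm a * norm w" by (rule Cauchy_Schwarz_ineq2)
    also have "\<dots> \<le> norm a * 1" using that B_def by (intro mult_left_mono) auto
    finally show ?thesis unfolding l_def Lb_def by linarith
  qed
  define Y where "Y = {w \<in> Z. l w \<ge> 0}"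
  define M where "M = Sup (l ` Y)"
  have z0Y: "z0 \<in> Y" using z0Z lz0 Y_def by simp
  have bddY: "bdd_above (l ` Y)"
    by (rule bdd_aboveI[of _ Lb]) (use lbound Y_def Z_def in force)
  have lM: "l w \<le> M" if "w \<in> Y" for w
    unfolding M_def using bddY that by (simp add: cSup_upper)
  have Mpos: "M > 0" using lM[OF z0Y] lz0 by simp
  define \<tau> where "\<tau> = M / 4"
  obtain zs where zsY: "zs \<in> Y" and lzs: "M - \<tau> < l zs"
  proof -
    have "M - \<tau> < Sup (l ` Y)" using Mpos unfolding \<tau>_def M_def[symmetric] by simp
    then obtain x where "x \<in> l ` Y" "M - \<tau> < x" using less_cSup_iff[OF _ bddY] z0Y by blast
    then show ?thesis using that by blast
  qed
  define Q where "Q = {w \<in> cball z0 \<epsilon>. l w \<ge> 0 \<and> (dist z0 w = \<epsilon> \<or> l w \<ge> M + \<tau>)}"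
  have QB: "Q \<subseteq> B" using cballB Q_def by auto
  have compQ: "compact Q"
  proof -
    have eq: "Q = cball z0 \<epsilon> \<inter> {w. 0 \<le> l w} \<inter> (sphere z0 \<epsilon> \<union> {w. (\<lambda>_. M + \<tau>) w \<le> l w})"
      unfolding Q_def by auto
    have "closed {w. (\<lambda>_. 0) w \<le> l w}" by (rule closed_Collect_le[OF _ lcont]) simp
    moreover have "closed {w. (\<lambda>_. M + \<tau>) w \<le> l w}" by (rule closed_Collect_le[OF _ lcont]) simp
    ultimately have "closed Q" unfolding eq by (intro closed_Int closed_Un) auto
    moreover have "bounded Q" unfolding Q_def by (rule bounded_subset[OF bounded_cball[of z0 \<epsilon>]]) auto
    ultimately show ?thesis by (simp add: compact_eq_bounded_closed)
  qed
  have Qpos: "u q > 0" if "q \<in> Q" for q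
  proof (rule ccontr)
    assume "\<not> u q > 0"
    moreover have qB: "q \<in> B" using that QB by auto
    ultimately have "u q = 0" using unn[of q] by simp
    then have qY: "q \<in> Y" using that qB unfolding Y_def Z_def Q_def by simp
    then have "dist z0 q < \<epsilon>" using cap Y_def by simp
    moreover have "l q \<le> M" using lM[OF qY] .
    ultimately show False using that Mpos unfolding Q_def \<tau>_def by auto
  qed
  obtain \<delta> where \<delta>: "\<delta> > 0" "\<And>q. q \<in> Q \<Longrightarrow> \<delta> * l q < u q"
    using exists_delta[OF compQ continuous_on_subset[OF contB QB] Qpos, of l Lb] lbound QB Lbpos
    by (metis abs_le_D1 subset_eq)
  define v where "v = (\<lambda>w. u w - \<delta> * l w)"
  have cvxv: "convex_on B v"
  proof -
    have "convex_on B (\<lambda>w. u w - ((\<delta> *\<^sub>R a) \<bullet> w + (- \<delta> * c)))"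
      by (rule convex_on_minus_affine[OF cvxB])
    moreover have "(\<lambda>w. u w - ((\<delta> *\<^sub>R a) \<bullet> w + (- \<delta> * c))) = v"
      unfolding v_def l_def by (simp add: algebra_simps fun_eq_iff)
    ultimately show ?thesis by simp
  qed
  have contv: "continuous_on B v" unfolding v_def
    by (intro continuous_intros contB continuous_on_subset[OF lcont]) auto
  define S where "S = {w \<in> B. v w \<le> 0}"
  have vz0: "v z0 < 0" unfolding v_def using uz0 \<delta>(1) lz0 by simp
  have S_ball: "dist z0 w < \<epsilon>" if wS: "w \<in> S" for w
  proof (rule ccontr)
    assume "\<not> dist z0 w < \<epsilon>"
    then have dw: "dist z0 w \<ge> \<epsilon>" by simp
    define t where "t = \<epsilon> / dist z0 w"
    have t: "0 < t" "t \<le> 1" using ratio01[OF \<epsilon>(1) dw] unfolding t_def by auto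
    define p where "p = (1 - t) *\<^sub>R z0 + t *\<^sub>R w"
    have wB: "w \<in> B" using wS S_def by simp
    have pB: "p \<in> B" unfolding p_def using convexD[OF convB z0B wB, of "1-t" t] t by simp
    have "v p \<le> (1 - t) * v z0 + t * v w"
      unfolding p_def using convex_onD[OF cvxv, of t z0 w] t z0B wB by simp
    also have "\<dots> \<le> 0" using vz0 wS S_def t by (intro add_nonpos_nonpos) (auto simp: mult_nonneg_nonpos)
    finally have vp: "v p \<le> 0" .
    have "dist z0 p = t * dist z0 w" unfolding p_def by (rule dist_comb) (use t in simp)
    then have dp: "dist z0 p = \<epsilon>" using dw \<epsilon>(1) unfolding t_def by auto
    have "0 \<le> u p" using unn[OF pB] .
    also have "u p \<le> \<delta> * l p" using vp v_def by simp
    finally have "l p \<ge> 0" using \<delta>(1) by (simp add: zero_le_mult_iff)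
    then have "p \<in> Q" using dp unfolding Q_def by simp
    then have "\<delta> * l p < u p" by (rule \<delta>(2))
    then show False using vp v_def by simp
  qed
  have S_l: "l w < M + \<tau>" if wS: "w \<in> S" for w
  proof (rule ccontr)
    assume "\<not> l w < M + \<tau>"
    then have "l w \<ge> M + \<tau>" by simp
    moreover have "dist z0 w < \<epsilon>" using S_ball[OF wS] .
    moreover have "l w \<ge> 0" using \<open>l w \<ge> M + \<tau>\<close> Mpos \<tau>_def by simp
    ultimately have "w \<in> Q" unfolding Q_def by simp
    then have "\<delta> * l w < u w" by (rule \<delta>(2))
    then show False using wS unfolding S_def v_def by simp
  qed
  have S_y: "\<bar>w $ i\<bar> \<le> \<delta> * (M + \<tau>)" if wS: "w \<in> S" and iK: "i \<in> K" for w i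
  proof -
    have wB: "w \<in> B" using wS S_def by simp
    have "\<bar>w $ i\<bar> \<le> norm (ypart K w)" by (rule ypart_comp[OF iK])
    also have "\<dots> \<le> u w" using ge wB B_def by simp
    also have "\<dots> \<le> \<delta> * l w" using wS unfolding S_def v_def by simp
    also have "\<dots> \<le> \<delta> * (M + \<tau>)" using S_l[OF wS] \<delta>(1) by simp
    finally show ?thesis .
  qed
  have Seq: "S = cball z0 \<epsilon> \<inter> v -` {..0}"
    using S_ball cballB unfolding S_def by (auto simp: less_imp_le)
  have compS: "compact S"
  proof -
    have "closed S" unfolding Seq
      by (rule continuous_closed_preimage[OF continuous_on_subset[OF contv cballB]]) auto
    moreover have "bounded S" unfolding Seq by (rule bounded_subset[OF bounded_cball[of z0 \<epsilon>]]) auto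
    ultimately show ?thesis by (simp add: compact_eq_bounded_closed)
  qed
  have SB: "S \<subseteq> B" unfolding S_def by auto
  have zsZ: "zs \<in> Z" and lzs0: "l zs \<ge> 0" using zsY Y_def by auto
  have zsB: "zs \<in> B" and uzs: "u zs = 0" using zsZ Z_def by auto
  define h where "h = \<delta> * l zs"
  have lzspos: "l zs > 3 * M / 4" using lzs \<tau>_def by simp
  have hpos: "h > 0" unfolding h_def using \<delta>(1) lzspos Mpos by simp
  have vzs: "v zs = - h" unfolding v_def h_def using uzs by simp
  have zsS: "zs \<in> S" unfolding S_def using zsB vzs hpos by simp
  have zsK: "zs $ i = 0" if "i \<in> K" for i
  proof -
    have "\<bar>zs $ i\<bar> \<le> norm (ypart K zs)" by (rule ypart_comp[OF that])
    also have "\<dots> \<le> u zs" using ge zsB B_def by simp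
    finally show ?thesis using uzs by simp
  qed
  have zsd: "dist z0 zs < \<epsilon>" using cap[OF zsZ lzs0] .
  define \<eta> where "\<eta> = min \<epsilon> h"
  have \<eta>pos: "\<eta> > 0" unfolding \<eta>_def using \<epsilon>(1) hpos by simp
  define d' where "d' = (\<lambda>i. if i \<in> K then \<eta> else \<epsilon>)"
  define d where "d = (\<lambda>i. 2 * d' i)"
  have dpos: "d i > 0" for i unfolding d_def d'_def using \<eta>pos \<epsilon>(1) by simp
  have dbound: "\<bar>w $ i - zs $ i\<bar> \<le> d i" if wS: "w \<in> S" for w i
  proof -
    have "\<bar>w $ i - zs $ i\<bar> = \<bar>(w - zs) $ i\<bar>" by simp
    also have "\<dots> \<le> norm (w - zs)" by (rule component_le_norm_cart)
    also have "\<dots> = dist w zs" by (simp add: dist_norm)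
    also have "\<dots> \<le> dist z0 w + dist z0 zs" by (metis dist_commute dist_triangle)
    also have "\<dots> \<le> 2 * \<epsilon>" using S_ball[OF wS] zsd by simp
    finally have e2: "\<bar>w $ i - zs $ i\<bar> \<le> 2 * \<epsilon>" .
    show ?thesis
    proof (cases "i \<in> K")
      case True
      have "\<bar>w $ i - zs $ i\<bar> = \<bar>w $ i\<bar>" using zsK[OF True] by simp
      also have "\<dots> \<le> \<delta> * (M + \<tau>)" by (rule S_y[OF wS True])
      also have "\<dots> \<le> 2 * h" unfolding h_def \<tau>_def using lzspos \<delta>(1) Mpos by simp
      finally have "\<bar>w $ i - zs $ i\<bar> \<le> 2 * h" .
      then show ?thesis using e2 True unfolding d_def d'_def \<eta>_def by simp
    next
      case False
      then show ?thesis using e2 unfolding d_def d'_def by simp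
    qed
  qed
  have npos: "real n > 0" using n1 by simp
  define e where "e = (\<lambda>i. h / (real n * d i))"
  have epos: "e i > 0" for i unfolding e_def using hpos npos dpos[of i] by simp
  have ed: "e i * d i = h / real n" for i unfolding e_def using dpos[of i] npos by simp
  define lo where "lo = \<delta> *\<^sub>R a - (\<chi> i. e i)"
  define hi where "hi = \<delta> *\<^sub>R a + (\<chi> i. e i)"
  have boxsub: "box lo hi \<subseteq> (\<Union>z\<in>S. subgradient u B z)"
  proof
    fix p assume pbox: "p \<in> box lo hi"
    define q where "q = p - \<delta> *\<^sub>R a"
    have qe: "\<bar>q $ i\<bar> < e i" for i
      using pbox unfolding mem_box_cart lo_def hi_def q_def by (simp add: abs_less_iff) (metis add.commute diff_less_eq less_diff_eq)
    define \<phi> where "\<phi> = (\<lambda>w. v w - q \<bullet> (w - zs))"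
    have \<phi>eq: "\<phi> = (\<lambda>w. u w - ((\<delta> *\<^sub>R a + q) \<bullet> w + (- \<delta> * c - q \<bullet> zs)))"
      unfolding \<phi>_def v_def l_def by (simp add: fun_eq_iff algebra_simps inner_diff_right inner_add_left)
    have cvx\<phi>: "convex_on B \<phi>" unfolding \<phi>eq by (rule convex_on_minus_affine[OF cvxB])
    have cont\<phi>: "continuous_on S \<phi>" unfolding \<phi>_def
      by (intro continuous_intros continuous_on_subset[OF contv SB])
    obtain w1 where w1S: "w1 \<in> S" and w1min: "\<And>y. y \<in> S \<Longrightarrow> \<phi> w1 \<le> \<phi> y"
      using continuous_attains_inf[OF compS _ cont\<phi>] zsS by blast
    have w1B: "w1 \<in> B" using w1S SB by auto
    have \<phi>zs: "\<phi> zs = - h" unfolding \<phi>_def using vzs by simp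
    have inner_small: "\<bar>q \<bullet> (w - zs)\<bar> < h" if wS: "w \<in> S" for w
    proof -
      have "\<bar>q \<bullet> (w - zs)\<bar> = \<bar>\<Sum>i\<in>UNIV. q $ i * (w - zs) $ i\<bar>" by (simp add: inner_vec_def)
      also have "\<dots> \<le> (\<Sum>i\<in>UNIV. \<bar>q $ i * (w - zs) $ i\<bar>)" by (rule sum_abs)
      also have "\<dots> < (\<Sum>i\<in>(UNIV::'n set). h / real n)"
      proof -
        have each: "\<bar>q $ i * (w - zs) $ i\<bar> < h / real n" for i
        proof -
          have "\<bar>q $ i * (w - zs) $ i\<bar> = \<bar>q $ i\<bar> * \<bar>w $ i - zs $ i\<bar>" by (simp add: abs_mult)
          also have "\<dots> \<le> \<bar>q $ i\<bar> * d i" by (intro mult_left_mono dbound[OF wS]) simp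
          also have "\<dots> < e i * d i" by (intro mult_strict_right_mono qe dpos)
          finally show ?thesis using ed by simp
        qed
        show ?thesis by (rule sum_strict_mono) (use each in auto)
      qed
      also have "\<dots> = h" using npos unfolding n_def by simp
      finally show ?thesis .
    qed
    have vw1: "v w1 < 0"
    proof (rule ccontr)
      assume "\<not> v w1 < 0"
      then have "v w1 = 0" using w1S S_def by simp
      then have "\<phi> w1 = - (q \<bullet> (w1 - zs))" unfolding \<phi>_def by simp
      then have "\<phi> w1 > - h" using inner_small[OF w1S] by simp
      then show False using w1min[OF zsS] \<phi>zs by simp
    qed
    have "open (B \<inter> v -` {..<0})" by (rule continuous_open_preimage[OF contv openB]) auto
    moreover have "w1 \<in> B \<inter> v -` {..<0}" using w1B vw1 by simp
    ultimately obtain r where r: "r > 0" "ball w1 r \<subseteq> B \<inter> v -` {..<0}"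
      using open_contains_ball by blast
    have glob: "\<phi> w1 \<le> \<phi> w" if wB: "w \<in> B" for w
    proof (rule ccontr)
      assume "\<not> \<phi> w1 \<le> \<phi> w"
      then have lt: "\<phi> w < \<phi> w1" by simp
      define t where "t = min (1/2) (r / (2 * (dist w1 w + 1)))"
      have t: "0 < t" "t \<le> 1" unfolding t_def using r(1) by (auto simp: add_nonneg_pos)
      have "t * dist w1 w \<le> (r / (2 * (dist w1 w + 1))) * dist w1 w"
        unfolding t_def by (intro mult_right_mono) auto
      also have "\<dots> < r"
      proof -
        have "(r / (2 * (dist w1 w + 1))) * dist w1 w = r * (dist w1 w / (2 * (dist w1 w + 1)))" by simp
        also have "dist w1 w / (2 * (dist w1 w + 1)) < 1"
        proof -
          have pos: "0 < 2 * (dist w1 w + 1)" by (simp add: add_nonneg_pos)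
          have "0 \<le> dist w1 w" by simp
          then show ?thesis unfolding pos_divide_less_eq[OF pos] by (smt (verit))
        qed
        then have "r * (dist w1 w / (2 * (dist w1 w + 1))) < r * 1" using r(1) by (intro mult_strict_left_mono)
        finally show ?thesis by simp
      qed
      finally have tr: "t * dist w1 w < r" .
      define y where "y = (1 - t) *\<^sub>R w1 + t *\<^sub>R w"
      have "dist w1 y = t * dist w1 w" unfolding y_def by (rule dist_comb) (use t in simp)
      then have "y \<in> ball w1 r" using tr by simp
      then have yS: "y \<in> S" using r(2) unfolding S_def by auto
      have "\<phi> y \<le> (1 - t) * \<phi> w1 + t * \<phi> w"
        unfolding y_def using convex_onD[OF cvx\<phi>, of t w1 w] t w1B wB by simp
      also have "\<dots> < (1 - t) * \<phi> w1 + t * \<phi> w1" using lt t by simp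
      also have "\<dots> = \<phi> w1" by (simp add: algebra_simps)
      finally show False using w1min[OF yS] by simp
    qed
    have "p \<in> subgradient u B w1"
      unfolding subgradient_def
    proof (intro CollectI ballI)
      fix w assume wB: "w \<in> B"
      have "\<phi> w1 \<le> \<phi> w" by (rule glob[OF wB])
      moreover have "p = \<delta> *\<^sub>R a + q" unfolding q_def by simp
      ultimately show "u w1 + p \<bullet> (w - w1) \<le> u w"
        unfolding \<phi>_def v_def l_def by (simp add: algebra_simps inner_diff_right inner_add_left)
    qed
    then show "p \<in> (\<Union>z\<in>S. subgradient u B z)" using w1S by blast
  qed
  have Sborel: "S \<in> sets borel" using compS by (simp add: borel_closed compact_imp_closed)
  have SB': "S \<subseteq> ball 0 1" using SB B_def by simp
  obtain T where T0: "T \<in> sets lebesgue" "(\<Union>z\<in>S. subgradient u (ball 0 1) z) \<subseteq> T"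
      "emeasure lebesgue T \<le> ennreal \<Lambda> * emeasure lebesgue S"
    using MA[unfolded MA_le_def, rule_format, OF conjI[OF Sborel SB']] by blast
  have T: "T \<in> sets lebesgue" "(\<Union>z\<in>S. subgradient u B z) \<subseteq> T"
      "emeasure lebesgue T \<le> ennreal \<Lambda> * emeasure lebesgue S"
    using T0 B_def by simp_all
  define P where "P = (\<Prod>i\<in>UNIV. 2 * e i)"
  define D where "D = (\<Prod>i\<in>UNIV. 2 * d i)"
  have Ppos: "P > 0" unfolding P_def using epos by (simp add: prod_pos)
  have Dpos: "D > 0" unfolding D_def using dpos by (simp add: prod_pos)
  have m1: "emeasure lebesgue (box lo hi) = ennreal P"
  proof -
    have "\<And>i. lo $ i \<le> hi $ i" unfolding lo_def hi_def using epos by (simp add: less_imp_le)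
    from emeasure_box_cart[OF this] show ?thesis unfolding P_def lo_def hi_def by simp
  qed
  define cl where "cl = zs - (\<chi> i. d i)"
  define ch where "ch = zs + (\<chi> i. d i)"
  have m2: "emeasure lebesgue (cbox cl ch) = ennreal D"
  proof -
    have "\<And>i. cl $ i \<le> ch $ i" unfolding cl_def ch_def using dpos by (simp add: less_imp_le)
    from emeasure_cbox_cart[OF this] show ?thesis unfolding D_def cl_def ch_def by simp
  qed
  have Ssub: "S \<subseteq> cbox cl ch"
  proof
    fix w assume "w \<in> S"
    then have "\<bar>w $ i - zs $ i\<bar> \<le> d i" for i using dbound by blast
    then show "w \<in> cbox cl ch" unfolding mem_box_cart cl_def ch_def by (simp add: abs_le_iff) (smt (verit))
  qed
  have "ennreal P = emeasure lebesgue (box lo hi)" using m1 by simp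
  also have "\<dots> \<le> emeasure lebesgue T" using boxsub T(1,2) by (intro emeasure_mono) auto
  also have "\<dots> \<le> ennreal \<Lambda> * emeasure lebesgue S" by (rule T(3))
  also have "\<dots> \<le> ennreal \<Lambda> * emeasure lebesgue (cbox cl ch)"
    using Ssub lmeasurable_cbox fmeasurableD by (intro mult_left_mono emeasure_mono) auto
  also have "\<dots> = ennreal \<Lambda> * ennreal D" using m2 by simp
  finally have PD: "ennreal P \<le> ennreal \<Lambda> * ennreal D" .
  have Lpos: "\<Lambda> > 0"
  proof (rule ccontr)
    assume "\<not> \<Lambda> > 0"
    then have "ennreal \<Lambda> = 0" by (simp add: ennreal_neg)
    then show False using PD Ppos by simp
  qed
  have PLD: "P \<le> \<Lambda> * D"
    using PD Lpos Dpos by (simp add: ennreal_mult[symmetric])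
  have "P * D \<le> \<Lambda> * D * D" using PLD Dpos by (simp add: mult_right_mono)
  moreover have "P * D = (4 * h / real n) ^ n"
  proof -
    have "P * D = (\<Prod>i\<in>UNIV. (2 * e i) * (2 * d i))" unfolding P_def D_def by (rule prod.distrib[symmetric])
    also have "\<dots> = (\<Prod>i\<in>(UNIV::'n set). 4 * h / real n)"
    proof (intro prod.cong refl)
      fix i :: 'n
      have "(2 * e i) * (2 * d i) = 4 * (e i * d i)" by simp
      then show "(2 * e i) * (2 * d i) = 4 * h / real n" using ed[of i] by simp
    qed
    also have "\<dots> = (4 * h / real n) ^ n" by (simp add: n_def)
    finally show ?thesis .
  qed
  moreover have "D * D \<le> 16 ^ n * (\<epsilon> * h) ^ n"
  proof -
    have "D * D = (\<Prod>i\<in>UNIV. 16 * (if i \<in> K then \<eta> else \<epsilon>)^2)"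
      unfolding D_def d_def d'_def by (simp add: prod.distrib[symmetric] power2_eq_square algebra_simps)
    also have "\<dots> = 16 ^ n * (\<Prod>i\<in>UNIV. (if i \<in> K then \<eta> else \<epsilon>)^2)"
      by (simp add: prod.distrib n_def)
    also have "\<dots> \<le> 16 ^ n * (\<epsilon> * h) ^ n"
      using prod_bound[OF \<eta>pos _ _ card2, of \<epsilon> h] unfolding n_def \<eta>_def by simp
    finally show ?thesis .
  qed
  ultimately have "(4 * h / real n) ^ n \<le> \<Lambda> * (16 ^ n * (\<epsilon> * h) ^ n)"
    using Lpos by (smt (verit) mult_left_mono mult.assoc)
  also have "16 ^ n * (\<epsilon> * h) ^ n = (4 * \<epsilon> * real n) ^ n * (4 * h / real n) ^ n"
  proof -
    have "16 * (\<epsilon> * h) = (4 * \<epsilon> * real n) * (4 * h / real n)" using npos by (simp add: field_simps)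
    then show ?thesis by (metis power_mult_distrib)
  qed
  finally have "1 * (4 * h / real n) ^ n \<le> (\<Lambda> * (4 * \<epsilon> * real n) ^ n) * (4 * h / real n) ^ n"
    by (simp add: mult.assoc)
  then have one: "1 \<le> \<Lambda> * (4 * \<epsilon> * real n) ^ n"
    using hpos npos by (subst (asm) mult_le_cancel_right) (auto simp: not_less)
  define x where "x = 4 * \<epsilon> * real n"
  have xpos: "x > 0" unfolding x_def using \<epsilon>(1) npos by simp
  have xX: "x * (\<bar>\<Lambda>\<bar> + 1) < 1" using \<epsilon>(3) unfolding x_def X_def by (simp add: algebra_simps)
  have x1: "x \<le> 1"
  proof -
    have "x * 1 \<le> x * (\<bar>\<Lambda>\<bar> + 1)" using xpos by (intro mult_left_mono) auto
    then show ?thesis using xX by simp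
  qed
  have "x ^ n \<le> x ^ 1" using n1 xpos x1 by (intro power_decreasing) auto
  then have "\<Lambda> * x ^ n \<le> \<Lambda> * x" using Lpos by (simp add: mult_left_mono)
  also have "\<dots> \<le> (\<bar>\<Lambda>\<bar> + 1) * x" using xpos by (intro mult_right_mono) auto
  also have "\<dots> < 1" using xX by (simp add: mult.commute)
  finally show False using one unfolding x_def by simp
qed

theorem proposition2p4:
  fixes u :: "real ^ 'n \<Rightarrow> real" and K :: "'n set" and \<Lambda> :: real
  assumes "CARD('n) \<ge> 2"
    and "K \<noteq> {}"
    and "2 * card K \<ge> CARD('n)"
    and "convex_on (ball 0 1) u"
    and "MA_le u (ball 0 1) \<Lambda>"
    and "u 0 = 0"
    and "\<And>z. z \<in> ball 0 1 \<Longrightarrow> u z \<ge> norm (ypart K z)"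
  shows "\<not> (\<exists>z. z extreme_point_of {z \<in> ball 0 1. u z = 0} \<and> (\<forall>i\<in>K. z $ i = 0))"
  using main[OF assms(3,4,5,7)] by blast

end
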